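(* Let $n\ge1$, $k>0$, let $F$ be a complex polynomial of degree exactly $n$ having all its zeros in the closed disk $|z|\le k$, and let $P\in\mathscr P_n$ satisfy $|P(z)|\le|F(z)|$ for $|z|=k$. Then for all $\alpha,\beta\in\mathbb C$ with $|\alpha|\le1$, $|\beta|\le1$, all $R>r\ge k$ and all $|z|\ge1$, $$\big|B[P\circ\sigma](z)+\Phi_k(R,r,\alpha,\beta)B[P\circ\rho](z)\big|\le\big|B[F\circ\sigma](z)+\Phi_k(R,r,\alpha,\beta)B[F\circ\rho](z)\big|.$$ The inequality is sharp: equality holds for $P=e^{i\gamma}F$, $\gamma\in\mathbb R$.
   Context: For an integer $n\ge1$, $\mathscr P_n$ denotes the set of complex polynomials of degree at most $n$. Fix complex numbers $\lambda_0,\lambda_1,\lambda_2$ such that all zeros of $U(z)=\lambda_0+n\lambda_1 z+\frac{n(n-1)}{2}\lambda_2 z^2$ lie in the half-plane $\{z\in\mathbb C:|z|\le|z-n/2|\}$. The operator $B$ (of the class $\mathcal B_n$) sends $P\in\mathscr P_n$ to $B[P](z)=\lambda_0P(z)+\lambda_1\frac{nz}{2}P'(z)+\lambda_2\left(\frac{nz}{2}\right)^2\frac{P''(z)}{2!}$. For a polynomial $P$ and a map $\rho$, $P\circ\rho$ denotes $z\mapsto P(\rho(z))$, and $B[P\circ\rho](z)$ is $B$ applied to the polynomial $P\circ\rho$, evaluated at $z$. For $k>0$, $R,r>0$ and $\alpha,\beta\in\mathbb C$: $\Phi_k(R,r,\alpha,\beta)=\beta\left\{\left(\frac{R+k}{k+r}\right)^n-|\alpha|\right\}-\alpha$;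 and $\sigma(z)=Rz$, $\rho(z)=rz$. *)

theory Defs
  imports "HOL-Analysis.Analysis" "HOL-Computational_Algebra.Polynomial"
begin

definition B_op :: "nat \<Rightarrow> complex \<Rightarrow> complex \<Rightarrow> complex \<Rightarrow> complex poly \<Rightarrow> complex \<Rightarrow> complex" where
  "B_op n l0 l1 l2 P z =
     l0 * poly P z
     + l1 * (of_nat n * z / 2) * poly (pderiv P) z
     + l2 * (of_nat n * z / 2)^2 * poly (pderiv (pderiv P)) z / 2"

definition U_poly :: "nat \<Rightarrow> complex \<Rightarrow> complex \<Rightarrow> complex \<Rightarrow> complex \<Rightarrow> complex" where
  "U_poly n l0 l1 l2 z = l0 + of_nat n * l1 * z + of_nat n * (of_nat n - 1) / 2 * l2 * z^2"

definition Phi :: "nat \<Rightarrow> real \<Rightarrow> real \<Rightarrow> real \<Rightarrow> complex \<Rightarrow> complex \<Rightarrow> complex" where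
  "Phi n k R r \<alpha> \<beta> = \<beta> * complex_of_real (((R + k) / (k + r))^n - cmod \<alpha>) - \<alpha>"

definition scale_arg :: "complex poly \<Rightarrow> real \<Rightarrow> complex poly" where
  "scale_arg P c = pcompose P [:0, complex_of_real c:]"

end

theory Submission
  imports Defs "HOL-Computational_Algebra.Fundamental_Theorem_Algebra"
begin


lemma poly_scale_arg[simp]: "poly (scale_arg p c) z = poly p (of_real c * z)"
  by (simp add: scale_arg_def poly_pcompose mult.commute)

lemma scale_arg_add: "scale_arg (p + q) c = scale_arg p c + scale_arg q c"
  by (simp add: scale_arg_def pcompose_add)

lemma scale_arg_smult: "scale_arg (smult a p) c = smult a (scale_arg p c)"
  by (simp add: scale_arg_def pcompose_smult)

lemma scale_arg_diff: "scale_arg (p - q) c = scale_arg p c - scale_arg q c"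
  by (simp add: scale_arg_def pcompose_diff)

lemma coeff_scale_arg: "coeff (scale_arg p c) i = of_real c ^ i * coeff p i"
  by (simp add: scale_arg_def coeff_pcompose_linear)

lemma B_op_add: "B_op n l0 l1 l2 (p + q) z = B_op n l0 l1 l2 p z + B_op n l0 l1 l2 q z"
  by (simp add: B_op_def pderiv_add algebra_simps add_divide_distrib)

lemma B_op_smult: "B_op n l0 l1 l2 (smult a p) z = a * B_op n l0 l1 l2 p z"
  by (simp add: B_op_def pderiv_smult algebra_simps)

lemma B_op_diff: "B_op n l0 l1 l2 (p - q) z = B_op n l0 l1 l2 p z - B_op n l0 l1 l2 q z"
  by (simp add: B_op_def pderiv_diff algebra_simps diff_divide_distrib)

lemma root_factor:
  fixes p :: "complex poly"
  assumes "degree p > 0"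
  obtains a q where "p = [:-a,1:] * q" "degree q = degree p - 1" "poly p a = 0"
proof -
  from assms have "\<not> constant (poly p)" by (simp add: constant_degree)
  then obtain a where a: "poly p a = 0" using fundamental_theorem_of_algebra by blast
  then obtain q where q: "p = [:-a,1:] * q" using poly_eq_0_iff_dvd by (metis dvdE)
  have "p \<noteq> 0" using assms by auto
  then have "q \<noteq> 0" using q by auto
  have "degree ([:-a,1:] * q) = degree [:-a,1:] + degree q"
    by (rule degree_mult_eq) (use \<open>q \<noteq> 0\<close> in auto)
  then have "degree p = 1 + degree q" using q by simp
  then show ?thesis using that q a by simp
qed



fun e2 :: "complex list \<Rightarrow> complex" where
  "e2 [] = 0"
| "e2 (v # vs) = e2 vs + v * sum_list vs"

lemma Re_v_gt:
  fixes z0 a :: complex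
  assumes "cmod a \<le> 1" "cmod z0 > 1"
  shows "Re (z0 / (z0 - a)) > 1/2"
proof -
  have h1: "(Re a)^2 + (Im a)^2 \<le> 1" using assms(1)
    by (metis cmod_power2 norm_ge_zero power_le_one_iff)
  have h2: "(Re z0)^2 + (Im z0)^2 > 1" using assms(2)
    by (metis cmod_power2 less_1_mult power2_eq_square)
  have ne: "(Re (z0 - a))^2 + (Im (z0 - a))^2 > 0"
  proof -
    have "z0 \<noteq> a" using assms by auto
    then have "z0 - a \<noteq> 0" by simp
    then show ?thesis using complex_neq_0 by blast
  qed
  have "Re (z0 / (z0 - a)) = (Re z0 * Re (z0 - a) + Im z0 * Im (z0 - a)) / ((Re (z0 - a))^2 + (Im (z0 - a))^2)"
    by (simp add: Re_divide)
  moreover have "(Re z0 * Re (z0 - a) + Im z0 * Im (z0 - a)) > 1/2 * ((Re (z0 - a))^2 + (Im (z0 - a))^2)"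
    using h1 h2 by (simp add: power2_eq_square algebra_simps)
  ultimately show ?thesis using ne by (simp add: less_divide_eq)
qed

lemma factor_data:
  fixes T :: "complex poly"
  assumes "T \<noteq> 0" "\<And>a. poly T a = 0 \<Longrightarrow> cmod a \<le> 1" "cmod z0 > 1"
  shows "\<exists>vs. length vs = degree T \<and> (\<forall>v\<in>set vs. Re v > 1/2)
     \<and> z0 * poly (pderiv T) z0 = poly T z0 * sum_list vs
     \<and> z0^2 * poly (pderiv (pderiv T)) z0 = 2 * poly T z0 * e2 vs
     \<and> poly T z0 \<noteq> 0"
  using assms
proof (induction "degree T" arbitrary: T)
  case 0
  then obtain c where c: "T = [:c:]" by (metis degree_eq_zeroE)
  with 0 have "c \<noteq> 0" by auto
  then show ?case using c by (intro exI[of _ "[]"]) auto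
next
  case (Suc d)
  then have "degree T > 0" by simp
  then obtain a Q where TQ: "T = [:-a,1:] * Q" and dQ: "degree Q = degree T - 1" and ra: "poly T a = 0"
    by (rule root_factor)
  have Q0: "Q \<noteq> 0" using Suc.prems TQ by auto
  have rootsQ: "cmod b \<le> 1" if "poly Q b = 0" for b
    using Suc.prems(2)[of b] that TQ by simp
  have dd: "d = degree Q" using Suc.hyps(2) dQ by simp
  obtain vs where vs: "length vs = degree Q" "\<forall>v\<in>set vs. Re v > 1/2"
     "z0 * poly (pderiv Q) z0 = poly Q z0 * sum_list vs"
     "z0^2 * poly (pderiv (pderiv Q)) z0 = 2 * poly Q z0 * e2 vs"
     "poly Q z0 \<noteq> 0"
    using Suc.hyps(1)[OF dd Q0 rootsQ Suc.prems(3)] by blast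
  have a1: "cmod a \<le> 1" using Suc.prems(2) ra by blast
  have y0: "z0 - a \<noteq> 0" using a1 Suc.prems(3) by auto
  define v where "v = z0 / (z0 - a)"
  have vre: "Re v > 1/2" unfolding v_def using Re_v_gt a1 Suc.prems(3) by blast
  have pT: "poly T z0 = (z0 - a) * poly Q z0" unfolding TQ by (simp add: algebra_simps)
  have pT1: "poly (pderiv T) z0 = poly Q z0 + (z0 - a) * poly (pderiv Q) z0"
    unfolding TQ pderiv_mult by (simp add: pderiv_pCons algebra_simps)
  have pT2: "poly (pderiv (pderiv T)) z0 = 2 * poly (pderiv Q) z0 + (z0 - a) * poly (pderiv (pderiv Q)) z0"
    unfolding TQ pderiv_mult pderiv_add by (simp add: pderiv_pCons algebra_simps)
  have zv: "z0 = (z0 - a) * v" unfolding v_def using y0 by simp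
  show ?case
  proof (intro exI[of _ "v # vs"] conjI)
    show "length (v # vs) = degree T" using vs(1) dQ Suc.hyps(2) by simp
    show "\<forall>w\<in>set (v # vs). Re w > 1/2" using vs(2) vre by simp
    show "z0 * poly (pderiv T) z0 = poly T z0 * sum_list (v # vs)"
    proof -
      have "z0 * poly (pderiv T) z0 = z0 * poly Q z0 + (z0 - a) * (z0 * poly (pderiv Q) z0)"
        by (simp add: pT1 algebra_simps)
      also have "\<dots> = (z0 - a) * v * poly Q z0 + (z0 - a) * (poly Q z0 * sum_list vs)"
        using vs(3) zv by simp
      finally show ?thesis by (simp add: pT algebra_simps)
    qed
    show "z0^2 * poly (pderiv (pderiv T)) z0 = 2 * poly T z0 * e2 (v # vs)"
    proof -
      have "z0^2 * poly (pderiv (pderiv T)) z0 = 2 * z0 * (z0 * poly (pderiv Q) z0) + (z0 - a) * (z0^2 * poly (pderiv (pderiv Q)) z0)"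
        by (simp add: pT2 algebra_simps power2_eq_square)
      also have "\<dots> = 2 * ((z0 - a) * v) * (poly Q z0 * sum_list vs) + (z0 - a) * (2 * poly Q z0 * e2 vs)"
        using vs(3) vs(4) zv by simp
      finally show ?thesis by (simp add: pT algebra_simps)
    qed
    show "poly T z0 \<noteq> 0" using pT y0 vs(5) by simp
  qed
qed



lemma parabola:
  fixes g p1 q1 p2 q2 :: real
  assumes g: "g > 0" and p: "p1 \<ge> g" and q: "q1 \<ge> g"
  shows "4*g^2*(p1*q1 - p2*q2) + (p1*q2 + p2*q1)^2 \<ge> 4*g^4"
proof -
  define s where "s = p1 - g"
  define t where "t = q1 - g"
  have s0: "s \<ge> 0" and t0: "t \<ge> 0" using p q by (auto simp: s_def t_def)
  define d where "d = q2 - p2"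
  define e where "e = q2 + p2"
  define \<sigma> where "\<sigma> = s + t"
  define \<delta> where "\<delta> = s - t"
  define a where "a = 4*g^2 + \<delta>^2"
  define b where "b = \<delta> * (2*g + \<sigma>)"
  define c where "c = 4*g*\<sigma> + \<sigma>^2"
  have f: "4*(4*g^2*(p1*q1 - p2*q2) + (p1*q2 + p2*q1)^2) = 16*g^4 + 16*g^3*\<sigma> + 16*g^2*(s*t) + (a*d^2 + 2*b*d*e + c*e^2)"
    unfolding s_def t_def d_def e_def \<sigma>_def \<delta>_def a_def b_def c_def
    by (simp add: power2_eq_square power4_eq_xxxx power3_eq_cube algebra_simps)
  have a0: "a > 0" unfolding a_def using g by (simp add: add_pos_nonneg)
  have "a*(a*d^2 + 2*b*d*e + c*e^2) = (a*d + b*e)^2 + (16*g^2*(g*\<sigma> + (s*t)))*e^2"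
    unfolding a_def b_def c_def \<sigma>_def \<delta>_def
    by (simp add: power2_eq_square algebra_simps)
  also have "\<dots> \<ge> 0" using g s0 t0 unfolding \<sigma>_def by (simp add: add_nonneg_nonneg)
  finally have "a*d^2 + 2*b*d*e + c*e^2 \<ge> 0" using a0
    by (simp add: zero_le_mult_iff)
  moreover have "16*g^3*\<sigma> + 16*g^2*(s*t) \<ge> 0" using g s0 t0 unfolding \<sigma>_def by simp
  ultimately have "16*g^4 \<le> 4*(4*g^2*(p1*q1 - p2*q2) + (p1*q2 + p2*q1)^2)" using f by linarith
  then show ?thesis by (smt (verit))
qed

lemma sum_sq_lt:
  fixes t :: "nat \<Rightarrow> real"
  assumes "n \<ge> 2" "\<And>i. i < n \<Longrightarrow> t i > 0"
  shows "(\<Sum>i<n. (t i)^2) < (\<Sum>i<n. t i)^2"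
  using assms
proof (induction n rule: nat_induct_at_least)
  case base
  have "t 0 > 0" "t 1 > 0" using base by auto
  then show ?case by (simp add: numeral_2_eq_2 power2_eq_square algebra_simps)
next
  case (Suc m)
  have IH: "(\<Sum>i<m. (t i)^2) < (\<Sum>i<m. t i)^2" using Suc by auto
  have pos: "(\<Sum>i<m. t i) > 0" using Suc by (intro sum_pos) auto
  have tm: "t m > 0" using Suc by auto
  have "(\<Sum>i<Suc m. (t i)^2) = (\<Sum>i<m. (t i)^2) + (t m)^2" by simp
  also have "\<dots> < (\<Sum>i<m. t i)^2 + (t m)^2" using IH by simp
  also have "\<dots> \<le> (\<Sum>i<m. t i)^2 + 2 * (\<Sum>i<m. t i) * t m + (t m)^2" using pos tm by simp
  also have "\<dots> = (\<Sum>i<Suc m. t i)^2" by (simp add: power2_eq_square algebra_simps)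
  finally show ?case .
qed

lemma final_real:
  fixes n X A B C p1 p2 q1 q2 :: real
  assumes n: "n \<ge> 2" and X: "X > n/2"
    and A: "A < (n-1)*(X - n/2)^2/n" and B: "B \<ge> 0" and CS: "C^2 \<le> A*B"
    and p1: "p1 \<ge> X/2 - n/4" and q1: "q1 \<ge> X/2 - n/4"
    and e1: "4*(n-1)*(p1*q1 - p2*q2) = n*(A - B)"
    and e2: "4*(n-1)*(p1*q2 + p2*q1) = 2*n*C"
  shows False
proof -
  define g where "g = X/2 - n/4"
  have g0: "g > 0" using X by (simp add: g_def)
  have par: "4*g^2*(p1*q1 - p2*q2) + (p1*q2 + p2*q1)^2 \<ge> 4*g^4"
    using parabola[OF g0] p1 q1 by (simp add: g_def)
  have n1: "n - 1 > 0" using n by simp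
  have n0: "n > 0" using n by simp
  define G where "G = (X - n/2)^2"
  have G0: "G > 0" using X unfolding G_def by simp
  have g2: "4*g^2 = G" unfolding g_def G_def by (simp add: power2_eq_square algebra_simps)
  have g4: "4*g^4 = G^2/4" using g2[symmetric] by (simp add: power2_eq_square power4_eq_xxxx)
  have W0: "p1*q1 - p2*q2 = n*(A - B)/(4*(n-1))" using e1 n1 by (simp add: field_simps)
  have W1: "4*g^2*(p1*q1 - p2*q2) = G*n*(A - B)/(4*(n-1))"
    unfolding W0 g2 by simp
  have W2: "(p1*q2 + p2*q1)^2 = n^2*C^2/(4*(n-1)^2)"
  proof -
    have "p1*q2 + p2*q1 = n*C/(2*(n-1))" using e2 n1 by (simp add: field_simps)
    then have "(p1*q2 + p2*q1)^2 = (n*C)^2/(2*(n-1))^2" by (simp only: power_divide)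
    also have "\<dots> = n^2*C^2/(4*(n-1)^2)" by (simp only: power_mult_distrib) simp
    finally show ?thesis .
  qed
  have ineq: "G*n*(A - B)/(4*(n-1)) + n^2*C^2/(4*(n-1)^2) \<ge> G^2/4"
    using par W1 W2 g4 by simp
  define M where "M = G*(n-1)/n"
  have M0: "M > 0" unfolding M_def using G0 n1 n0 by simp
  have k0: "4*(n-1)^2/n^2 > 0" using n1 n0 by simp
  define m where "m = n - 1"
  have m0: "m > 0" using n1 by (simp add: m_def)
  have ineq': "G*n*(A - B)/(4*m) + n^2*C^2/(4*m^2) \<ge> G^2/4" using ineq by (simp add: m_def)
  have k0: "4*m^2/n^2 > 0" using m0 n0 by simp
  have "(G*n*(A - B)/(4*m) + n^2*C^2/(4*m^2)) * (4*m^2/n^2) \<ge> G^2/4 * (4*m^2/n^2)"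
    using ineq' k0 by (intro mult_right_mono) auto
  moreover have "(G*n*(A - B)/(4*m) + n^2*C^2/(4*m^2)) * (4*m^2/n^2) = M*(A - B) + C^2"
    unfolding M_def m_def[symmetric] using m0 n0 by (simp add: field_simps power2_eq_square)
  moreover have "G^2/4 * (4*m^2/n^2) = M^2"
    unfolding M_def m_def[symmetric] using m0 n0 by (simp add: field_simps power2_eq_square)
  ultimately have "M*(A - B) + C^2 \<ge> M^2" by simp
  then have "M*(A - B) + A*B \<ge> M^2" using CS by simp
  moreover have "(M - A)*(M + B) > 0"
  proof -
    have "M = (n-1)*(X - n/2)^2/n" unfolding M_def G_def by simp
    then have "A < M" using A by simp
    then show ?thesis using B M0 by (intro mult_pos_pos) auto
  qed
  ultimately show False by (simp add: algebra_simps power2_eq_square)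
qed



lemma e2_eq: "2 * e2 vs = (sum_list vs)^2 - sum_list (map (\<lambda>v. v^2) vs)"
  by (induction vs) (simp_all add: power2_eq_square algebra_simps)

lemma halfplane:
  fixes \<zeta> :: complex
  assumes "n > 0" "Re \<zeta> > real n / 4"
  shows "cmod (\<zeta> - of_nat n / 2) < cmod \<zeta>"
proof -
  have "(cmod (\<zeta> - of_nat n / 2))^2 = (Re \<zeta> - real n/2)^2 + (Im \<zeta>)^2"
    by (simp add: cmod_power2)
  also have "\<dots> < (Re \<zeta>)^2 + (Im \<zeta>)^2"
    using assms by (simp add: power2_eq_square algebra_simps)
  also have "\<dots> = (cmod \<zeta>)^2" by (simp add: cmod_power2)
  finally show ?thesis by (rule power_less_imp_less_base) simp
qed

lemma U_root_re:
  assumes "n > 0" "\<And>z. U_poly n l0 l1 l2 z = 0 \<Longrightarrow> cmod z \<le> cmod (z - of_nat n / 2)"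
    "U_poly n l0 l1 l2 \<zeta> = 0"
  shows "Re \<zeta> \<le> real n / 4"
  using halfplane[OF assms(1), of \<zeta>] assms(2)[OF assms(3)] by linarith

lemma Re_sum_list_gt:
  assumes "vs \<noteq> []" "\<forall>v\<in>set vs. Re v > 1/2"
  shows "Re (sum_list vs) > real (length vs) / 2"
  using assms
proof (induction vs)
  case Nil then show ?case by simp
next
  case (Cons v vs)
  show ?case
  proof (cases "vs = []")
    case True then show ?thesis using Cons by simp
  next
    case False
    then have "Re (sum_list vs) > real (length vs) / 2" using Cons by simp
    then show ?thesis using Cons.prems by simp
  qed
qed

lemma centered_prod:
  fixes x y :: "nat \<Rightarrow> real"
  assumes "n > 0"
  shows "(\<Sum>i<n. (x i - (\<Sum>j<n. x j)/n) * (y i - (\<Sum>j<n. y j)/n))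
       = (\<Sum>i<n. x i * y i) - (\<Sum>i<n. x i) * (\<Sum>i<n. y i) / n"
proof -
  define a where "a = (\<Sum>j<n. x j)/n"
  define b where "b = (\<Sum>j<n. y j)/n"
  have "(\<Sum>i<n. (x i - a) * (y i - b)) = (\<Sum>i<n. x i * y i) - b*(\<Sum>i<n. x i) - a*(\<Sum>i<n. y i) + n*a*b"
    by (simp add: algebra_simps sum.distrib sum_subtractf sum_distrib_left sum_distrib_right)
  also have "\<dots> = (\<Sum>i<n. x i * y i) - (\<Sum>i<n. x i) * (\<Sum>i<n. y i) / n"
    using assms unfolding a_def b_def by (simp add: field_simps)
  finally show ?thesis unfolding a_def b_def .
qed

lemma quad_roots:
  fixes A B C :: complex
  assumes "C \<noteq> 0"
  shows "\<exists>z1 z2. \<forall>z. A + B*z + C*z^2 = C*(z - z1)*(z - z2)"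
proof -
  define s where "s = csqrt (B^2 - 4*A*C)"
  have s2: "s^2 = B^2 - 4*A*C" unfolding s_def by simp
  define z1 where "z1 = (-B + s)/(2*C)"
  define z2 where "z2 = (-B - s)/(2*C)"
  have sum: "C*(z1 + z2) = -B" unfolding z1_def z2_def using assms by (simp add: field_simps)
  have prod: "C*(z1 * z2) = A"
  proof -
    have "C*(z1*z2) = (B^2 - s^2)/(4*C)" unfolding z1_def z2_def using assms
      by (simp add: field_simps power2_eq_square)
    also have "\<dots> = A" using s2 assms by (simp add: field_simps power2_eq_square)
    finally show ?thesis .
  qed
  have "A + B*z + C*z^2 = C*(z - z1)*(z - z2)" for z
  proof -
    have "C*(z - z1)*(z - z2) = C*z^2 - C*(z1+z2)*z + C*(z1*z2)"
      by (simp add: power2_eq_square algebra_simps)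
    then show ?thesis using sum prod by simp
  qed
  then show ?thesis by blast
qed



lemma alg:
  fixes vs :: "complex list"
  assumes n: "n \<ge> 1" and len: "length vs = n" and re: "\<forall>v\<in>set vs. Re v > 1/2"
    and U: "\<And>z. U_poly n l0 l1 l2 z = 0 \<Longrightarrow> cmod z \<le> cmod (z - of_nat n / 2)"
  shows "l0 + l1 * (of_nat n/2) * sum_list vs + l2 * (of_nat n^2/4) * e2 vs \<noteq> 0"
proof
  assume f0: "l0 + l1 * (of_nat n/2) * sum_list vs + l2 * (of_nat n^2/4) * e2 vs = 0"
  define s1 where "s1 = sum_list vs"
  define s2 where "s2 = sum_list (map (\<lambda>v. v^2) vs)"
  have e2v: "e2 vs = (s1^2 - s2)/2" using e2_eq[of vs] unfolding s1_def s2_def by (simp add: mult.commute)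
  have key: "l0 + l1 * (of_nat n/2) * sum_list vs + l2 * (of_nat n^2/4) * e2 vs
      = U_poly n l0 l1 l2 (s1/2) - l2 * of_nat n/8 * (of_nat n * s2 - s1^2)"
    unfolding U_poly_def e2v s1_def[symmetric] by (simp add: field_simps power2_eq_square)
  have n0: "n > 0" using n by simp
  have ne: "vs \<noteq> []" using len n by auto
  have Res1: "Re s1 > real n/2" using Re_sum_list_gt[OF ne re] len unfolding s1_def by simp
  have Uns: "U_poly n l0 l1 l2 (s1/2) \<noteq> 0"
  proof
    assume "U_poly n l0 l1 l2 (s1/2) = 0"
    then have "Re (s1/2) \<le> real n/4" using U_root_re[OF n0 U] by blast
    then show False using Res1 by simp
  qed
  show False
  proof (cases "l2 = 0 \<or> n = 1")
    case True
    have "l2 * of_nat n/8 * (of_nat n * s2 - s1^2) = 0"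
    proof (cases "l2 = 0")
      case False
      then have "n = 1" using True by simp
      then obtain v where "vs = [v]" using len by (cases vs) auto
      then show ?thesis using \<open>n = 1\<close> unfolding s1_def s2_def by simp
    qed simp
    then have "l0 + l1 * (of_nat n/2) * sum_list vs + l2 * (of_nat n^2/4) * e2 vs = U_poly n l0 l1 l2 (s1/2)"
      by (simp only: key diff_zero)
    then show False using f0 Uns by simp
  next
    case False
    then have l2: "l2 \<noteq> 0" and n2: "n \<ge> 2" using n by auto
    define C0 where "C0 = of_nat n * (of_nat n - 1) / 2 * l2"
    have C0: "C0 \<noteq> 0" unfolding C0_def using l2 n2 by simp
    obtain z1 z2 where fac: "\<And>z. l0 + (of_nat n * l1) * z + C0 * z^2 = C0 * (z - z1) * (z - z2)"
      using quad_roots[OF C0, of l0 "of_nat n * l1"] by blast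
    have Ufac: "U_poly n l0 l1 l2 z = C0 * (z - z1) * (z - z2)" for z
      using fac[of z] unfolding U_poly_def C0_def by (simp add: algebra_simps)
    have rz1: "Re z1 \<le> real n/4" using U_root_re[of n l0 l1 l2 z1, OF n0 U] Ufac[of z1] by simp
    have rz2: "Re z2 \<le> real n/4" using U_root_re[of n l0 l1 l2 z2, OF n0 U] Ufac[of z2] by simp
    define p where "p = s1/2 - z1"
    define q where "q = s1/2 - z2"
    have "C0 * p * q = l2 * of_nat n/8 * (of_nat n * s2 - s1^2)"
      using f0 key Ufac[of "s1/2"] unfolding p_def q_def by simp
    moreover have "(l2 * of_nat n / 8) * (4 * (of_nat n - 1) * (p * q)) = C0 * p * q"
      unfolding C0_def by (simp add: field_simps)
    ultimately have "(l2 * of_nat n / 8) * (4 * (of_nat n - 1) * (p * q)) = (l2 * of_nat n / 8) * (of_nat n * s2 - s1^2)"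
      by simp
    moreover have "l2 * of_nat n / 8 \<noteq> 0" using l2 n0 by simp
    ultimately have pq: "4 * (of_nat n - 1) * (p * q) = of_nat n * s2 - s1^2"
      by (rule mult_left_cancel[THEN iffD1, rotated])
    define x where "x i = Re (vs ! i)" for i
    define y where "y i = Im (vs ! i)" for i
    define X where "X = (\<Sum>i<n. x i)"
    define Y where "Y = (\<Sum>i<n. y i)"
    have s1i: "s1 = (\<Sum>i<n. vs ! i)" unfolding s1_def using len by (simp add: sum_list_sum_nth lessThan_atLeast0)
    have s2i: "s2 = (\<Sum>i<n. (vs ! i)^2)" unfolding s2_def using len by (simp add: sum_list_sum_nth lessThan_atLeast0)
    have ReS1: "Re s1 = X" unfolding s1i X_def x_def by (simp add: Re_sum)
    have ImS1: "Im s1 = Y" unfolding s1i Y_def y_def by (simp add: Im_sum)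
    have ReS2: "Re s2 = (\<Sum>i<n. (x i)^2) - (\<Sum>i<n. (y i)^2)"
      unfolding s2i x_def y_def by (simp add: Re_sum power2_eq_square sum_subtractf)
    have ImS2: "Im s2 = 2 * (\<Sum>i<n. x i * y i)"
      unfolding s2i x_def y_def by (simp add: Im_sum power2_eq_square sum_distrib_left mult.commute)
    define A where "A = (\<Sum>i<n. (x i)^2) - X^2/n"
    define B where "B = (\<Sum>i<n. (y i)^2) - Y^2/n"
    define C where "C = (\<Sum>i<n. x i * y i) - X * Y/n"
    have cA: "A = (\<Sum>i<n. (x i - X/n) * (x i - X/n))"
      using centered_prod[OF n0, of x x] unfolding A_def X_def by (simp add: power2_eq_square)
    have cB: "B = (\<Sum>i<n. (y i - Y/n) * (y i - Y/n))"
      using centered_prod[OF n0, of y y] unfolding B_def Y_def by (simp add: power2_eq_square)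
    have cC: "C = (\<Sum>i<n. (x i - X/n) * (y i - Y/n))"
      using centered_prod[OF n0, of x y] unfolding C_def X_def Y_def by simp
    have B0: "B \<ge> 0" unfolding cB by (intro sum_nonneg) simp
    have CS: "C^2 \<le> A * B"
      unfolding cA cB cC using Cauchy_Schwarz_ineq_sum[of "\<lambda>i. x i - X/n" "\<lambda>i. y i - Y/n" "{..<n}"]
      by (simp add: power2_eq_square)
    have Xg: "X > real n/2" using Res1 ReS1 by simp
    have xpos: "x i - 1/2 > 0" if "i < n" for i
      using re len that unfolding x_def by (simp add: nth_mem)
    have ssl: "(\<Sum>i<n. (x i - 1/2)^2) < (\<Sum>i<n. x i - 1/2)^2"
      using sum_sq_lt[OF n2, of "\<lambda>i. x i - 1/2"] xpos by simp
    have e1: "(\<Sum>i<n. x i - 1/2) = X - real n/2" unfolding X_def by (simp add: sum_subtractf)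
    have e2': "(\<Sum>i<n. (x i - 1/2)^2) = (\<Sum>i<n. (x i)^2) - X + real n/4"
      unfolding X_def by (simp add: power2_diff sum_subtractf sum.distrib sum_distrib_left algebra_simps power2_eq_square)
    have Abound: "A < (real n - 1) * (X - real n/2)^2/real n"
    proof -
      have "(\<Sum>i<n. (x i)^2) < (X - real n/2)^2 + X - real n/4" using ssl e1 e2' by simp
      then have "A < (X - real n/2)^2 + X - real n/4 - X^2/n" unfolding A_def by simp
      also have "\<dots> = (real n - 1) * (X - real n/2)^2/real n"
        using n0 by (simp add: field_simps power2_eq_square)
      finally show ?thesis .
    qed
    have p1: "Re p \<ge> X/2 - real n/4" unfolding p_def using rz1 ReS1 by simp
    have q1: "Re q \<ge> X/2 - real n/4" unfolding q_def using rz2 ReS1 by simp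
    have reeq: "4 * (real n - 1) * (Re p * Re q - Im p * Im q) = real n * (A - B)"
    proof -
      have "Re (4 * (of_nat n - 1) * (p * q)) = Re (of_nat n * s2 - s1^2)" using pq by simp
      then have "4 * (real n - 1) * (Re p * Re q - Im p * Im q) = real n * Re s2 - ((Re s1)^2 - (Im s1)^2)"
        by (simp add: power2_eq_square)
      moreover have "real n * (A - B) = real n * ((\<Sum>i<n. (x i)^2) - (\<Sum>i<n. (y i)^2)) - (X^2 - Y^2)"
      proof -
        have "real n * (X^2/real n) = X^2" "real n * (Y^2/real n) = Y^2" using n0 by simp_all
        then show ?thesis unfolding A_def B_def by (simp add: algebra_simps)
      qed
      ultimately show ?thesis unfolding ReS2 ReS1 ImS1 by simp
    qed
    have imeq: "4 * (real n - 1) * (Re p * Im q + Im p * Re q) = 2 * real n * C"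
    proof -
      have "Im (4 * (of_nat n - 1) * (p * q)) = Im (of_nat n * s2 - s1^2)" using pq by simp
      then have "4 * (real n - 1) * (Re p * Im q + Im p * Re q) = real n * Im s2 - 2 * Re s1 * Im s1"
        by (simp add: power2_eq_square)
      moreover have "2 * real n * C = real n * (2 * (\<Sum>i<n. x i * y i)) - 2 * X * Y"
      proof -
        have "real n * (X * Y/real n) = X * Y" using n0 by simp
        then show ?thesis unfolding C_def using n0 by (simp add: algebra_simps)
      qed
      ultimately show ?thesis unfolding ImS2 ReS1 ImS1 by simp
    qed
    show False
      using final_real[of "real n" X A B C "Re p" "Re q" "Im p" "Im q"] n2 Xg Abound B0 CS p1 q1 reeq imeq
      by simp
  qed
qed



lemma B_nonzero:
  fixes T :: "complex poly"
  assumes n: "n \<ge> 1" and U: "\<And>z. U_poly n l0 l1 l2 z = 0 \<Longrightarrow> cmod z \<le> cmod (z - of_nat n / 2)"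
    and dT: "degree T = n" and rT: "\<And>a. poly T a = 0 \<Longrightarrow> cmod a \<le> 1" and z0: "cmod z0 > 1"
  shows "B_op n l0 l1 l2 T z0 \<noteq> 0"
proof -
  have T0: "T \<noteq> 0" using dT n by auto
  obtain vs where vs: "length vs = degree T" "\<forall>v\<in>set vs. Re v > 1/2"
     "z0 * poly (pderiv T) z0 = poly T z0 * sum_list vs"
     "z0^2 * poly (pderiv (pderiv T)) z0 = 2 * poly T z0 * e2 vs"
     "poly T z0 \<noteq> 0"
    using factor_data[OF T0 rT z0] by blast
  have "B_op n l0 l1 l2 T z0 = l0 * poly T z0 + l1 * (of_nat n/2) * (z0 * poly (pderiv T) z0)
        + l2 * (of_nat n^2/4) * (z0^2 * poly (pderiv (pderiv T)) z0) / 2"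
    unfolding B_op_def by (simp add: power_mult_distrib power_divide algebra_simps)
  also have "\<dots> = poly T z0 * (l0 + l1 * (of_nat n/2) * sum_list vs + l2 * (of_nat n^2/4) * e2 vs)"
    unfolding vs(3) vs(4) by (simp add: algebra_simps)
  finally show ?thesis using vs(5) alg[OF n _ vs(2) U] vs(1) dT by simp
qed

lemma factor_ineq:
  fixes z a :: complex and k r R :: real
  assumes k: "k > 0" "k \<le> r" "r < R" and a: "cmod a \<le> k" and z: "cmod z > 1"
  shows "(R + k)/(r + k) * cmod (of_real r * z - a) < cmod (of_real R * z - a)"
proof -
  define t where "t = cmod z"
  define s where "s = cmod a"
  define x where "x = Re z * Re a + Im z * Im a"
  have sq: "(cmod (of_real c * z - a))^2 = c^2 * t^2 - 2 * c * x + s^2" for c :: real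
    unfolding t_def s_def x_def cmod_power2 by (simp add: power2_eq_square algebra_simps)
  have xts: "x + t * s \<ge> 0"
  proof -
    have "Re (z * cnj a) = x" unfolding x_def by simp
    moreover have "\<bar>Re (z * cnj a)\<bar> \<le> cmod (z * cnj a)" by (rule abs_Re_le_cmod)
    moreover have "cmod (z * cnj a) = t * s" unfolding t_def s_def by (simp add: norm_mult)
    ultimately show ?thesis by linarith
  qed
  have t1: "t > 1" using z t_def by simp
  have s0: "s \<ge> 0" "s \<le> k" using a s_def by auto
  define L where "L = (R + k) * cmod (of_real r * z - a)"
  define M where "M = (r + k) * cmod (of_real R * z - a)"
  have "M^2 - L^2 = (r+k)^2 * (R^2 * t^2 - 2 * R * x + s^2) - (R+k)^2 * (r^2 * t^2 - 2 * r * x + s^2)"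
    unfolding L_def M_def power_mult_distrib sq by simp
  also have "\<dots> = 2 * (x + t * s) * ((R - r) * (r * R - k^2)) + (R - r) * (k * t - s) * ((r+k) * (R * t + s) + (R+k) * (r * t + s))"
    by (simp add: power2_eq_square algebra_simps)
  also have "\<dots> > 0"
  proof -
    have "r * R - k^2 \<ge> 0" using k by (simp add: power2_eq_square mult_mono)
    then have "2 * (x + t * s) * ((R - r) * (r * R - k^2)) \<ge> 0" using xts k by simp
    moreover have "k * t - s > 0" using t1 s0 k
      by (smt (verit) mult_less_cancel_left1)
    moreover have "(r+k) * (R * t + s) + (R+k) * (r * t + s) > 0"
    proof -
      have "(r+k) * (R * t + s) > 0" using k t1 s0 by (intro mult_pos_pos add_pos_nonneg) auto
      moreover have "(R+k) * (r * t + s) > 0" using k t1 s0 by (intro mult_pos_pos add_pos_nonneg) auto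
      ultimately show ?thesis by simp
    qed
    ultimately show ?thesis using k by (simp add: add_nonneg_pos)
  qed
  finally have "L^2 < M^2" by simp
  moreover have "M \<ge> 0" unfolding M_def using k by simp
  ultimately have "L < M" by (simp add: power_less_imp_less_base)
  then show ?thesis unfolding L_def M_def using k by (simp add: field_simps)
qed



lemma prod_ineq:
  fixes S :: "complex poly" and k r R :: real
  assumes k: "k > 0" "k \<le> r" "r < R" and S0: "S \<noteq> 0"
    and rS: "\<And>a. poly S a = 0 \<Longrightarrow> cmod a \<le> k" and z: "cmod z > 1"
  shows "((R + k)/(r + k))^(degree S) * cmod (poly S (of_real r * z)) \<le> cmod (poly S (of_real R * z))
         \<and> poly S (of_real R * z) \<noteq> 0"
  using S0 rS
proof (induction "degree S" arbitrary: S)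
  case 0
  then obtain c where c: "S = [:c:]" by (metis degree_eq_zeroE)
  with 0 have "c \<noteq> 0" by auto
  then show ?case using c by simp
next
  case (Suc d)
  then have "degree S > 0" by simp
  then obtain a Q where SQ: "S = [:-a,1:] * Q" and dQ: "degree Q = degree S - 1" and ra: "poly S a = 0"
    by (rule root_factor)
  have Q0: "Q \<noteq> 0" using Suc.prems SQ by auto
  have rootsQ: "cmod b \<le> k" if "poly Q b = 0" for b
    using Suc.prems(2)[of b] that SQ by simp
  have dd: "d = degree Q" using Suc.hyps(2) dQ by simp
  have IH: "((R + k)/(r + k))^d * cmod (poly Q (of_real r * z)) \<le> cmod (poly Q (of_real R * z))
         \<and> poly Q (of_real R * z) \<noteq> 0"
    using Suc.hyps(1)[OF dd Q0 rootsQ] dd by simp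
  have a: "cmod a \<le> k" using Suc.prems(2) ra by blast
  have fi: "(R + k)/(r + k) * cmod (of_real r * z - a) < cmod (of_real R * z - a)"
    using factor_ineq[OF k a z] .
  have q0: "(R + k)/(r + k) \<ge> 0" using k by simp
  have nn: "(R + k)/(r + k) * cmod (of_real r * z - a) \<ge> 0" using k by simp
  have pS: "poly S w = (w - a) * poly Q w" for w unfolding SQ by (simp add: algebra_simps)
  have "((R + k)/(r + k))^(degree S) * cmod (poly S (of_real r * z))
      = ((R + k)/(r + k) * cmod (of_real r * z - a)) * (((R + k)/(r + k))^d * cmod (poly Q (of_real r * z)))"
    unfolding Suc.hyps(2)[symmetric] pS by (simp add: norm_mult mult_ac)
  also have "\<dots> \<le> cmod (of_real R * z - a) * cmod (poly Q (of_real R * z))"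
    using fi IH q0 by (intro mult_mono) auto
  also have "\<dots> = cmod (poly S (of_real R * z))" unfolding pS by (simp add: norm_mult)
  finally have 1: "((R + k)/(r + k))^(degree S) * cmod (poly S (of_real r * z)) \<le> cmod (poly S (of_real R * z))" .
  have "of_real R * z - a \<noteq> 0" using fi nn by auto
  then have "poly S (of_real R * z) \<noteq> 0" using IH unfolding pS by simp
  with 1 show ?case by blast
qed

lemma prod_ineq_strict:
  fixes S :: "complex poly" and k r R :: real
  assumes k: "k > 0" "k \<le> r" "r < R" and dS: "degree S > 0"
    and rS: "\<And>a. poly S a = 0 \<Longrightarrow> cmod a \<le> k" and z: "cmod z > 1"
  shows "((R + k)/(r + k))^(degree S) * cmod (poly S (of_real r * z)) < cmod (poly S (of_real R * z))"
proof -
  obtain a Q where SQ: "S = [:-a,1:] * Q" and dQ: "degree Q = degree S - 1" and ra: "poly S a = 0"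
    using dS by (rule root_factor)
  have Q0: "Q \<noteq> 0" using dS SQ by auto
  have rootsQ: "cmod b \<le> k" if "poly Q b = 0" for b
    using rS[of b] that SQ by simp
  have IH: "((R + k)/(r + k))^(degree Q) * cmod (poly Q (of_real r * z)) \<le> cmod (poly Q (of_real R * z))
         \<and> poly Q (of_real R * z) \<noteq> 0"
    using prod_ineq[OF k Q0 rootsQ z] .
  have a: "cmod a \<le> k" using rS ra by blast
  have fi: "(R + k)/(r + k) * cmod (of_real r * z - a) < cmod (of_real R * z - a)"
    using factor_ineq[OF k a z] .
  have q0: "(R + k)/(r + k) \<ge> 0" using k by simp
  have nn: "(R + k)/(r + k) * cmod (of_real r * z - a) \<ge> 0" using k by simp
  have pS: "poly S w = (w - a) * poly Q w" for w unfolding SQ by (simp add: algebra_simps)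
  have dS': "degree S = Suc (degree Q)" using dQ dS by simp
  have "((R + k)/(r + k))^(degree S) * cmod (poly S (of_real r * z))
      = ((R + k)/(r + k) * cmod (of_real r * z - a)) * (((R + k)/(r + k))^(degree Q) * cmod (poly Q (of_real r * z)))"
    unfolding dS' pS by (simp add: norm_mult mult_ac)
  also have "\<dots> \<le> ((R + k)/(r + k) * cmod (of_real r * z - a)) * cmod (poly Q (of_real R * z))"
    using IH nn by (intro mult_left_mono) auto
  also have "\<dots> < cmod (of_real R * z - a) * cmod (poly Q (of_real R * z))"
    using fi IH by (intro mult_strict_right_mono) auto
  also have "\<dots> = cmod (poly S (of_real R * z))" unfolding pS by (simp add: norm_mult)
  finally show ?thesis .
qed



lemma degree_scale_arg_le: "degree (scale_arg p c) \<le> degree p"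
  unfolding scale_arg_def by (simp add: degree_pcompose)

lemma Z_nonzero:
  fixes S :: "complex poly" and k r R :: real
  assumes n: "n \<ge> 1" and U: "\<And>z. U_poly n l0 l1 l2 z = 0 \<Longrightarrow> cmod z \<le> cmod (z - of_nat n / 2)"
    and k: "k > 0" "k \<le> r" "r < R" and dS: "degree S = n"
    and rS: "\<And>a. poly S a = 0 \<Longrightarrow> cmod a \<le> k"
    and Phi: "cmod \<Phi> \<le> ((R + k)/(r + k))^n" and z0: "cmod z0 > 1"
  shows "B_op n l0 l1 l2 (scale_arg S R) z0 + \<Phi> * B_op n l0 l1 l2 (scale_arg S r) z0 \<noteq> 0"
proof -
  define T where "T = scale_arg S R + smult \<Phi> (scale_arg S r)"
  have BT: "B_op n l0 l1 l2 T z0 = B_op n l0 l1 l2 (scale_arg S R) z0 + \<Phi> * B_op n l0 l1 l2 (scale_arg S r) z0"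
    unfolding T_def by (simp add: B_op_add B_op_smult)
  define q where "q = (R + k)/(r + k)"
  have q0: "q \<ge> 0" unfolding q_def using k by simp
  have rT: "cmod z \<le> 1" if "poly T z = 0" for z
  proof (rule ccontr)
    assume "\<not> cmod z \<le> 1"
    then have z1: "cmod z > 1" by simp
    have str: "q^n * cmod (poly S (of_real r * z)) < cmod (poly S (of_real R * z))"
      using prod_ineq_strict[of k r R S z, OF k _ rS z1] dS n unfolding q_def by simp
    have "poly S (of_real R * z) = - \<Phi> * poly S (of_real r * z)"
      using that unfolding T_def by (simp add: algebra_simps add_eq_0_iff)
    then have "cmod (poly S (of_real R * z)) = cmod \<Phi> * cmod (poly S (of_real r * z))"
      by (simp add: norm_mult)
    also have "\<dots> \<le> q^n * cmod (poly S (of_real r * z))"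
      using Phi unfolding q_def by (intro mult_right_mono) auto
    finally show False using str by simp
  qed
  have dT: "degree T = n"
  proof (rule antisym)
    show "degree T \<le> n" unfolding T_def using dS
      by (intro degree_add_le order.trans[OF degree_smult_le] degree_scale_arg_le order.trans[OF degree_scale_arg_le]) auto
  next
    have cS: "coeff S n \<noteq> 0" using dS n by (metis leading_coeff_0_iff not_one_le_zero degree_0)
    have "cmod (\<Phi> * of_real r ^ n) \<le> q^n * r^n"
      using Phi k unfolding q_def by (simp add: norm_mult norm_power mult_right_mono)
    also have "\<dots> = (q * r)^n" by (simp add: power_mult_distrib)
    also have "\<dots> < R^n"
    proof -
      have "q * r < R" unfolding q_def using k by (simp add: field_simps)
      then show ?thesis using q0 k n by (intro power_strict_mono) auto
    qed
    finally have lt: "cmod (\<Phi> * of_real r ^ n) < R^n" .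
    have "of_real R ^ n + \<Phi> * of_real r ^ n \<noteq> (0::complex)"
    proof
      assume "of_real R ^ n + \<Phi> * of_real r ^ n = (0::complex)"
      then have "cmod (\<Phi> * of_real r ^ n) = cmod (of_real R ^ n :: complex)"
        by (metis add_eq_0_iff norm_minus_cancel)
      then show False using lt k by (simp add: norm_power)
    qed
    moreover have "coeff T n = coeff S n * (of_real R ^ n + \<Phi> * of_real r ^ n)"
      unfolding T_def by (simp add: coeff_scale_arg algebra_simps)
    ultimately have "coeff T n \<noteq> 0" using cS by simp
    then show "n \<le> degree T" by (rule le_degree)
  qed
  show ?thesis using B_nonzero[of n l0 l1 l2 T z0, OF n U dT rT z0] BT by simp
qed



lemma local_increase:
  fixes N K :: "complex poly"
  assumes N0: "N \<noteq> 0" and N00: "poly N 0 = 0" and K0: "poly K 0 \<noteq> 0" and e: "\<epsilon> > 0"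
  shows "\<exists>\<delta>. cmod \<delta> < \<epsilon> \<and> cmod (poly K \<delta>) < cmod (poly K \<delta> + poly N \<delta>)"
proof -
  define m where "m = order 0 N"
  obtain N1 where N1: "N = [:- 0, 1:] ^ m * N1" "\<not> [:- 0, 1:] dvd N1"
    using order_decomp[OF N0, of 0] unfolding m_def by blast
  have m0: "m \<noteq> 0" using N00 N0 order_root unfolding m_def by blast
  define c where "c = poly N1 0"
  have c0: "c \<noteq> 0" unfolding c_def using N1(2) poly_eq_0_iff_dvd by blast
  have pN: "poly N x = x^m * poly N1 x" for x using N1(1) by simp
  define w where "w = poly K 0 / c"
  have w0: "w \<noteq> 0" unfolding w_def using K0 c0 by simp
  define \<omega> where "\<omega> = cis (Arg w / m)"
  have om: "\<omega>^m = sgn w"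
  proof -
    have "\<omega>^m = cis (real m * (Arg w / real m))" unfolding \<omega>_def by (rule Complex.DeMoivre)
    also have "real m * (Arg w / real m) = Arg w" using m0 by simp
    finally show ?thesis using w0 by (simp add: cis_Arg)
  qed
  have nom: "cmod \<omega> = 1" unfolding \<omega>_def by simp
  define \<rho> where "\<rho> = 1 / cmod w"
  have rho0: "\<rho> > 0" unfolding \<rho>_def using w0 by simp
  define h where "h t = \<omega>^m * poly N1 (of_real t * \<omega>) / poly K (of_real t * \<omega>)" for t :: real
  have h0: "h 0 = of_real \<rho>"
  proof -
    have "h 0 = sgn w * c / poly K 0" unfolding h_def om c_def by simp
    also have "\<dots> = sgn w / w" unfolding w_def using c0 K0 by (simp add: field_simps)
    also have "\<dots> = of_real \<rho>" unfolding \<rho>_def sgn_eq using w0 by (simp add: field_simps)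
    finally show ?thesis .
  qed
  have "continuous (at 0) h" unfolding h_def using K0
    by (intro continuous_intros) auto
  then have "(h \<longlongrightarrow> h 0) (at 0)" by (simp add: continuous_at)
  then obtain d where d: "d > 0" "\<And>t. t \<noteq> 0 \<Longrightarrow> norm (t - 0) < d \<Longrightarrow> norm (h t - h 0) < \<rho>"
    using rho0 unfolding LIM_eq by blast
  define t where "t = min (d/2) (\<epsilon>/2)"
  have t0: "t > 0" "t < d" "t < \<epsilon>" unfolding t_def using d e by auto
  have ht: "cmod (h t - of_real \<rho>) < \<rho>" using d(2)[of t] t0 h0 by simp
  then have hne: "h t \<noteq> 0" by auto
  have Kt: "poly K (of_real t * \<omega>) \<noteq> 0" using hne unfolding h_def by auto
  have Reh: "Re (h t) > 0"
  proof -
    have "Re (of_real \<rho> - h t) \<le> cmod (h t - of_real \<rho>)"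
      by (metis complex_Re_le_cmod norm_minus_commute)
    then show ?thesis using ht by simp
  qed
  define \<delta> where "\<delta> = of_real t * \<omega>"
  have nd: "cmod \<delta> = t" unfolding \<delta>_def using nom t0 by (simp add: norm_mult)
  have Nd: "poly N \<delta> = poly K \<delta> * (of_real (t^m) * h t)"
    unfolding pN h_def \<delta>_def using Kt by (simp add: power_mult_distrib field_simps)
  have "Re (1 + of_real (t^m) * h t) > 1" using Reh t0 by simp
  then have gt1: "cmod (1 + of_real (t^m) * h t) > 1"
    using complex_Re_le_cmod less_le_trans by blast
  have "cmod (poly K \<delta> + poly N \<delta>) = cmod (poly K \<delta>) * cmod (1 + of_real (t^m) * h t)"
    unfolding Nd by (simp add: norm_mult[symmetric] algebra_simps)
  also have "\<dots> > cmod (poly K \<delta>)" using gt1 Kt unfolding \<delta>_def by simp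
  finally show ?thesis using nd t0 by auto
qed



lemma max_principle:
  fixes A G :: "complex poly"
  assumes G0: "\<And>u. cmod u \<le> 1 \<Longrightarrow> poly G u \<noteq> 0"
    and bd: "\<And>u. cmod u = 1 \<Longrightarrow> cmod (poly A u) \<le> cmod (poly G u)"
    and u: "cmod u \<le> 1"
  shows "cmod (poly A u) \<le> cmod (poly G u)"
proof -
  define f where "f u = cmod (poly A u / poly G u)" for u
  have fle: "f v \<le> 1" if "cmod v = 1" for v
  proof -
    have "poly G v \<noteq> 0" using G0 that by simp
    then show ?thesis unfolding f_def using bd[OF that] by (simp add: norm_divide divide_le_eq)
  qed
  have "continuous_on (cball 0 1) f" unfolding f_def using G0
    by (intro continuous_intros) auto
  then obtain us where us: "us \<in> cball 0 1" "\<And>y. y \<in> cball 0 1 \<Longrightarrow> f y \<le> f us"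
    using continuous_attains_sup[of "cball 0 1" f] by auto
  have fus: "f us \<le> 1"
  proof (rule ccontr)
    assume "\<not> f us \<le> 1"
    then have gt: "f us > 1" by simp
    have us1: "cmod us < 1" using us(1) fle gt by (metis dist_0_norm le_less mem_cball not_le)
    have Gus: "poly G us \<noteq> 0" using G0 us1 by simp
    have Aus: "poly A us \<noteq> 0" using gt unfolding f_def by auto
    define N where "N = smult (poly G us) (pcompose A [:us,1:]) - smult (poly A us) (pcompose G [:us,1:])"
    define K where "K = smult (poly A us) (pcompose G [:us,1:])"
    have pN: "poly N d = poly G us * poly A (us + d) - poly A us * poly G (us + d)" for d
      unfolding N_def by (simp add: poly_pcompose)
    have pK: "poly K d = poly A us * poly G (us + d)" for d
      unfolding K_def by (simp add: poly_pcompose)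
    show False
    proof (cases "N = 0")
      case True
      then have "poly G us * poly A 1 = poly A us * poly G 1"
        using pN[of "1 - us"] by simp
      then have "poly A 1 / poly G 1 = poly A us / poly G us" using Gus G0[of 1]
        by (simp add: frac_eq_eq mult.commute)
      then have "f 1 = f us" unfolding f_def by simp
      then show False using fle[of 1] gt by simp
    next
      case False
      have "poly N 0 = 0" using pN[of 0] by simp
      moreover have "poly K 0 \<noteq> 0" using pK[of 0] Aus Gus by simp
      ultimately obtain d where d: "cmod d < 1 - cmod us" "cmod (poly K d) < cmod (poly K d + poly N d)"
        using local_increase[OF False] us1 by (metis diff_gt_0_iff_gt)
      have ud: "cmod (us + d) < 1" using d(1) norm_triangle_ineq[of us d] by simp
      have Gud: "poly G (us + d) \<noteq> 0" using G0 ud by simp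
      have "cmod (poly A us) * cmod (poly G (us + d)) < cmod (poly G us) * cmod (poly A (us + d))"
        using d(2) unfolding pK pN by (simp add: norm_mult)
      moreover have "cmod (poly G us) > 0" "cmod (poly G (us + d)) > 0" using Gus Gud by auto
      ultimately have "f us < f (us + d)" unfolding f_def
        by (simp add: norm_divide field_simps)
      moreover have "f (us + d) \<le> f us" using us(2)[of "us + d"] ud by simp
      ultimately show False by simp
    qed
  qed
  have "f u \<le> 1" using us(2)[of u] u fus by simp
  then show ?thesis unfolding f_def using G0[OF u] by (simp add: norm_divide divide_le_eq)
qed



lemma boundary_cont:
  fixes A1 G1 :: "complex poly"
  assumes "cmod \<zeta> = 1" and h: "\<And>v. cmod v = 1 \<Longrightarrow> v \<noteq> \<zeta> \<Longrightarrow> cmod (poly A1 v) \<le> cmod (poly G1 v)"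
  shows "cmod (poly A1 \<zeta>) \<le> cmod (poly G1 \<zeta>)"
proof -
  define g where "g t = cmod (poly G1 (\<zeta> * cis t)) - cmod (poly A1 (\<zeta> * cis t))" for t
  have "continuous_on (closure {0<..<1::real}) g" unfolding g_def
    by (intro continuous_intros)
  moreover have "(0::real) \<in> closure {0<..<1::real}" by simp
  moreover have "0 \<le> g t" if t: "t \<in> {0<..<1::real}" for t
  proof -
    have "sin t > 0" using t pi_gt3 by (intro sin_gt_zero) auto
    then have "cis t \<noteq> 1" by (metis cis.sel(2) one_complex.sel(2) less_irrefl)
    then have "\<zeta> * cis t \<noteq> \<zeta>" using assms(1) by auto
    moreover have "cmod (\<zeta> * cis t) = 1" using assms(1) by (simp add: norm_mult)
    ultimately show ?thesis using h unfolding g_def by simp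
  qed
  ultimately have "0 \<le> g 0" by (rule continuous_ge_on_closure)
  then show ?thesis unfolding g_def by simp
qed

lemma max_principle2:
  fixes A G :: "complex poly"
  assumes G0: "\<And>u. cmod u < 1 \<Longrightarrow> poly G u \<noteq> 0" and Gn: "G \<noteq> 0"
    and bd: "\<And>u. cmod u = 1 \<Longrightarrow> cmod (poly A u) \<le> cmod (poly G u)"
    and u: "cmod u < 1"
  shows "cmod (poly A u) \<le> cmod (poly G u)"
  using G0 Gn bd u
proof (induction "degree G" arbitrary: A G rule: less_induct)
  case less
  show ?case
  proof (cases "\<exists>\<zeta>. cmod \<zeta> = 1 \<and> poly G \<zeta> = 0")
    case False
    have "cmod (poly A u) \<le> cmod (poly G u)" if "cmod u \<le> 1" for u
    proof (rule max_principle[of G A u])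
      show "poly G v \<noteq> 0" if "cmod v \<le> 1" for v
        using False less.prems(1)[of v] that by (cases "cmod v = 1") auto
    qed (use less.prems that in auto)
    then show ?thesis using less.prems(4) by simp
  next
    case True
    then obtain \<zeta> where z: "cmod \<zeta> = 1" "poly G \<zeta> = 0" by blast
    have Az: "poly A \<zeta> = 0" using less.prems(3)[OF z(1)] z(2) by simp
    obtain G1 where G1: "G = [:-\<zeta>,1:] * G1" using z(2) poly_eq_0_iff_dvd by (metis dvdE)
    obtain A1 where A1: "A = [:-\<zeta>,1:] * A1" using Az poly_eq_0_iff_dvd by (metis dvdE)
    have G10: "G1 \<noteq> 0" using G1 less.prems(2) by auto
    have "degree ([:-\<zeta>,1:] * G1) = degree [:-\<zeta>,1:] + degree G1"
      by (rule degree_mult_eq) (use G10 in auto)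
    then have dG: "degree G1 < degree G" using G1 by simp
    have pG: "poly G v = (v - \<zeta>) * poly G1 v" for v unfolding G1 by (simp add: algebra_simps)
    have pA: "poly A v = (v - \<zeta>) * poly A1 v" for v unfolding A1 by (simp add: algebra_simps)
    have G1z: "poly G1 v \<noteq> 0" if "cmod v < 1" for v using less.prems(1)[OF that] pG by auto
    have bd1': "cmod (poly A1 v) \<le> cmod (poly G1 v)" if "cmod v = 1" "v \<noteq> \<zeta>" for v
    proof -
      have "cmod (v - \<zeta>) * cmod (poly A1 v) \<le> cmod (v - \<zeta>) * cmod (poly G1 v)"
        using less.prems(3)[OF that(1)] unfolding pA pG by (simp add: norm_mult)
      moreover have "cmod (v - \<zeta>) > 0" using that by simp
      ultimately show ?thesis by simp
    qed
    have bd1: "cmod (poly A1 v) \<le> cmod (poly G1 v)" if "cmod v = 1" for v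
    proof (cases "v = \<zeta>")
      case True
      then show ?thesis using boundary_cont[OF z(1) bd1'] by simp
    qed (use bd1' that in auto)
    have "cmod (poly A1 u) \<le> cmod (poly G1 u)"
      using less.hyps[OF dG G1z G10 bd1 less.prems(4)] by blast
    then show ?thesis unfolding pA pG by (simp add: norm_mult mult_left_mono)
  qed
qed



definition revk :: "nat \<Rightarrow> real \<Rightarrow> complex poly \<Rightarrow> complex poly" where
  "revk n k P = (\<Sum>j\<le>n. monom (coeff P j * of_real k ^ j) (n - j))"

lemma poly_revk: "poly (revk n k P) u = (\<Sum>j\<le>n. coeff P j * of_real k ^ j * u ^ (n - j))"
  unfolding revk_def by (simp add: poly_sum poly_monom)

lemma poly_le_n:
  fixes P :: "complex poly"
  assumes "degree P \<le> n"
  shows "poly P x = (\<Sum>j\<le>n. coeff P j * x ^ j)"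
proof -
  have e: "(\<Sum>i\<le>n. monom (coeff P i) i) = P" using poly_as_sum_of_monoms'[OF assms] by simp
  have "poly (\<Sum>i\<le>n. monom (coeff P i) i) x = (\<Sum>j\<le>n. coeff P j * x ^ j)"
    by (simp add: poly_sum poly_monom)
  then show ?thesis unfolding e .
qed

lemma revk_eval:
  assumes "degree P \<le> n" "u \<noteq> 0"
  shows "poly (revk n k P) u = u ^ n * poly P (of_real k / u)"
proof -
  have "u ^ n * poly P (of_real k / u) = (\<Sum>j\<le>n. u ^ n * (coeff P j * (of_real k / u) ^ j))"
    unfolding poly_le_n[OF assms(1)] by (simp add: sum_distrib_left)
  also have "\<dots> = (\<Sum>j\<le>n. coeff P j * of_real k ^ j * u ^ (n - j))"
  proof (rule sum.cong)
    fix j assume "j \<in> {..n}"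
    then have "u ^ n = u ^ (n - j) * u ^ j" by (simp add: power_add[symmetric])
    then show "u ^ n * (coeff P j * (of_real k / u) ^ j) = coeff P j * of_real k ^ j * u ^ (n - j)"
      using assms(2) by (simp add: power_divide field_simps)
  qed simp
  finally show ?thesis unfolding poly_revk by simp
qed

lemma revk_zero: "poly (revk n k P) 0 = coeff P n * of_real k ^ n"
proof -
  have "{..n} = insert n {..<n}" by auto
  then have "poly (revk n k P) 0 = coeff P n * of_real k ^ n + (\<Sum>j<n. coeff P j * of_real k ^ j * 0 ^ (n - j))"
    unfolding poly_revk by simp
  also have "(\<Sum>j<n. coeff P j * of_real k ^ j * (0::complex) ^ (n - j)) = 0"
    by (intro sum.neutral) auto
  finally show ?thesis by simp
qed

lemma L1:
  fixes P F :: "complex poly" and k :: real and lam0 :: complex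
  assumes n: "n \<ge> 1" and k: "k > 0" and degF: "degree F = n"
    and zerosF: "\<And>z. poly F z = 0 \<Longrightarrow> cmod z \<le> k"
    and degP: "degree P \<le> n"
    and PF: "\<And>z. cmod z = k \<Longrightarrow> cmod (poly P z) \<le> cmod (poly F z)"
    and lam: "cmod lam0 > 1"
  shows "degree (P - smult lam0 F) = n \<and> (\<forall>z. poly (P - smult lam0 F) z = 0 \<longrightarrow> cmod z \<le> k)"
proof -
  define A where "A = revk n k P"
  define G where "G = revk n k F"
  have cF: "coeff F n \<noteq> 0" using degF n by (metis leading_coeff_0_iff not_one_le_zero degree_0)
  have G00: "poly G 0 \<noteq> 0" unfolding G_def revk_zero using cF k by simp
  then have Gn: "G \<noteq> 0" by auto
  have kz: "cmod (of_real k / u) = k / cmod u" for u using k by (simp add: norm_divide)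
  have G0: "poly G u \<noteq> 0" if "cmod u < 1" for u
  proof (cases "u = 0")
    case True then show ?thesis using G00 by simp
  next
    case False
    have "k / cmod u > k" using that False k by (simp add: less_divide_eq)
    then have "poly F (of_real k / u) \<noteq> 0" using zerosF kz by (metis not_le)
    then show ?thesis unfolding G_def revk_eval[OF order.eq_iff[THEN iffD1, OF degF, THEN conjunct1] False] using False by simp
  qed
  have bd: "cmod (poly A u) \<le> cmod (poly G u)" if "cmod u = 1" for u
  proof -
    have u0: "u \<noteq> 0" using that by auto
    have "cmod (poly P (of_real k / u)) \<le> cmod (poly F (of_real k / u))"
      using PF kz that by simp
    then show ?thesis unfolding A_def G_def revk_eval[OF degP u0] revk_eval[OF order.eq_iff[THEN iffD1, OF degF, THEN conjunct1] u0]
      using that by (simp add: norm_mult norm_power)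
  qed
  have MP: "cmod (poly A u) \<le> cmod (poly G u)" if "cmod u < 1" for u
    using max_principle2[of G A u, OF G0 Gn bd that] .
  have cPF: "cmod (coeff P n) \<le> cmod (coeff F n)"
    using MP[of 0] k unfolding A_def G_def revk_zero by (simp add: norm_mult norm_power)
  define S where "S = P - smult lam0 F"
  have dS: "degree S = n"
  proof (rule antisym)
    show "degree S \<le> n" unfolding S_def using degP degF
      by (intro degree_diff_le) (auto intro: order.trans[OF degree_smult_le])
  next
    have "cmod (lam0 * coeff F n) > cmod (coeff F n)" using lam cF by (simp add: norm_mult)
    then have "coeff P n - lam0 * coeff F n \<noteq> 0" using cPF by auto
    then have "coeff S n \<noteq> 0" unfolding S_def by simp
    then show "n \<le> degree S" by (rule le_degree)
  qed
  have rS: "cmod z \<le> k" if "poly S z = 0" for z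
  proof (rule ccontr)
    assume "\<not> cmod z \<le> k"
    then have zk: "cmod z > k" by simp
    then have z0: "z \<noteq> 0" using k by auto
    define u where "u = of_real k / z"
    have u0: "u \<noteq> 0" unfolding u_def using k z0 by simp
    have u1: "cmod u < 1" unfolding u_def using zk k by (simp add: norm_divide divide_less_eq)
    have ku: "of_real k / u = z" unfolding u_def using k z0 by simp
    have "cmod (poly A u) \<le> cmod (poly G u)" using MP u1 .
    then have "cmod u ^ n * cmod (poly P z) \<le> cmod u ^ n * cmod (poly F z)"
      unfolding A_def G_def revk_eval[OF degP u0] revk_eval[OF order.eq_iff[THEN iffD1, OF degF, THEN conjunct1] u0] ku
      by (simp add: norm_mult norm_power)
    then have PFz: "cmod (poly P z) \<le> cmod (poly F z)" using u0 by simp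
    have Fz: "poly F z \<noteq> 0" using zerosF zk by (metis not_le)
    have "poly P z = lam0 * poly F z" using that unfolding S_def by simp
    then have "cmod (poly P z) = cmod lam0 * cmod (poly F z)" by (simp add: norm_mult)
    also have "\<dots> > cmod (poly F z)" using lam Fz by simp
    finally show False using PFz by simp
  qed
  show ?thesis using dS rS unfolding S_def by blast
qed



lemma Phi_bound:
  assumes k: "k > 0" "k \<le> r" "r < R" and a: "cmod \<alpha> \<le> 1" and b: "cmod \<beta> \<le> 1"
  shows "cmod (Phi n k R r \<alpha> \<beta>) \<le> ((R + k)/(r + k))^n"
proof -
  define q where "q = (R + k)/(r + k)"
  have q1: "q \<ge> 1" unfolding q_def using k by simp
  then have qn: "q^n \<ge> 1" by simp
  have "Phi n k R r \<alpha> \<beta> = \<beta> * of_real (q^n - cmod \<alpha>) - \<alpha>"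
    unfolding Phi_def q_def by (simp add: add.commute)
  then have "cmod (Phi n k R r \<alpha> \<beta>) \<le> cmod \<beta> * \<bar>q^n - cmod \<alpha>\<bar> + cmod \<alpha>"
    by (metis norm_mult norm_of_real norm_triangle_ineq4)
  also have "\<dots> \<le> 1 * (q^n - cmod \<alpha>) + cmod \<alpha>"
    using qn a b by (intro add_mono mult_mono) auto
  finally show ?thesis unfolding q_def by simp
qed

lemma main_ineq_open:
  fixes n :: nat and k R r :: real and l0 l1 l2 :: complex and F P :: "complex poly"
  assumes n: "n \<ge> 1"
    and U: "\<And>z. U_poly n l0 l1 l2 z = 0 \<Longrightarrow> cmod z \<le> cmod (z - of_nat n / 2)"
    and k: "k > 0" "k \<le> r" "r < R"
    and degF: "degree F = n"
    and zerosF: "\<And>z. poly F z = 0 \<Longrightarrow> cmod z \<le> k"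
    and degP: "degree P \<le> n"
    and PF: "\<And>z. cmod z = k \<Longrightarrow> cmod (poly P z) \<le> cmod (poly F z)"
    and Phi: "cmod \<Phi> \<le> ((R + k)/(r + k))^n"
    and w: "cmod w > 1"
  shows "cmod (B_op n l0 l1 l2 (scale_arg P R) w + \<Phi> * B_op n l0 l1 l2 (scale_arg P r) w)
       \<le> cmod (B_op n l0 l1 l2 (scale_arg F R) w + \<Phi> * B_op n l0 l1 l2 (scale_arg F r) w)"
proof (rule ccontr)
  define L where "L X = B_op n l0 l1 l2 (scale_arg X R) w + \<Phi> * B_op n l0 l1 l2 (scale_arg X r) w" for X
  assume "\<not> ?thesis"
  then have gt: "cmod (L P) > cmod (L F)" unfolding L_def by simp
  have LF: "L F \<noteq> 0" unfolding L_def
    using Z_nonzero[of n l0 l1 l2 k r R F, OF n U k degF zerosF Phi w] by blast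
  define lam where "lam = L P / L F"
  have lam: "cmod lam > 1" unfolding lam_def using gt LF by (simp add: norm_divide)
  have S: "degree (P - smult lam F) = n \<and> (\<forall>z. poly (P - smult lam F) z = 0 \<longrightarrow> cmod z \<le> k)"
    using L1[of n k F P lam, OF n k(1) degF zerosF degP PF lam] .
  have "L (P - smult lam F) \<noteq> 0" unfolding L_def
    using Z_nonzero[of n l0 l1 l2 k r R "P - smult lam F", OF n U k] S Phi w by blast
  moreover have "L (P - smult lam F) = L P - lam * L F"
    unfolding L_def by (simp add: scale_arg_diff scale_arg_smult B_op_diff B_op_smult algebra_simps)
  moreover have "L P - lam * L F = 0" unfolding lam_def using LF by simp
  ultimately show False by simp
qed

theorem theorem2p1:
  fixes n :: nat and k R r :: real and l0 l1 l2 :: complex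
    and F P :: "complex poly"
  assumes n: "n \<ge> 1"
    and U: "\<And>z. U_poly n l0 l1 l2 z = 0 \<Longrightarrow> cmod z \<le> cmod (z - of_nat n / 2)"
    and k: "k > 0"
    and degF: "degree F = n"
    and zerosF: "\<And>z. poly F z = 0 \<Longrightarrow> cmod z \<le> k"
    and degP: "degree P \<le> n"
    and PF: "\<And>z. cmod z = k \<Longrightarrow> cmod (poly P z) \<le> cmod (poly F z)"
  shows "(\<forall>\<alpha> \<beta> z. cmod \<alpha> \<le> 1 \<longrightarrow> cmod \<beta> \<le> 1 \<longrightarrow> R > r \<longrightarrow> r \<ge> k \<longrightarrow> cmod z \<ge> 1 \<longrightarrow>
            cmod (B_op n l0 l1 l2 (scale_arg P R) z
                  + Phi n k R r \<alpha> \<beta> * B_op n l0 l1 l2 (scale_arg P r) z)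
            \<le> cmod (B_op n l0 l1 l2 (scale_arg F R) z
                  + Phi n k R r \<alpha> \<beta> * B_op n l0 l1 l2 (scale_arg F r) z))
       \<and> (\<forall>\<gamma>::real. \<forall>\<alpha> \<beta> z.
            cmod (B_op n l0 l1 l2 (scale_arg (smult (cis \<gamma>) F) R) z
                  + Phi n k R r \<alpha> \<beta> * B_op n l0 l1 l2 (scale_arg (smult (cis \<gamma>) F) r) z)
            = cmod (B_op n l0 l1 l2 (scale_arg F R) z
                  + Phi n k R r \<alpha> \<beta> * B_op n l0 l1 l2 (scale_arg F r) z))"
proof (intro conjI allI impI)
  fix \<alpha> \<beta> z
  assume a: "cmod \<alpha> \<le> 1" and b: "cmod \<beta> \<le> 1" and rR: "R > r" and kr: "r \<ge> k" and z: "cmod z \<ge> 1"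
  define \<Phi> where "\<Phi> = Phi n k R r \<alpha> \<beta>"
  have kk: "k > 0" "k \<le> r" "r < R" using k kr rR by auto
  have Phb: "cmod \<Phi> \<le> ((R + k)/(r + k))^n" unfolding \<Phi>_def using Phi_bound[OF kk a b] .
  define g where "g w = cmod (B_op n l0 l1 l2 (scale_arg F R) w + \<Phi> * B_op n l0 l1 l2 (scale_arg F r) w)
       - cmod (B_op n l0 l1 l2 (scale_arg P R) w + \<Phi> * B_op n l0 l1 l2 (scale_arg P r) w)" for w
  have gpos: "g w \<ge> 0" if "cmod w > 1" for w
    using main_ineq_open[OF n U kk degF zerosF degP PF Phb that] unfolding g_def by simp
  have "g z \<ge> 0"
  proof (cases "cmod z > 1")
    case True then show ?thesis using gpos by simp
  next
    case False
    define h where "h t = g (of_real (1 + t) * z)" for t :: real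
    have "continuous_on (closure {0<..<1::real}) h" unfolding h_def g_def B_op_def
      by (intro continuous_intros) auto
    moreover have "(0::real) \<in> closure {0<..<1::real}" by simp
    moreover have "0 \<le> h t" if t: "t \<in> {0<..<1::real}" for t
    proof -
      have "cmod (of_real (1 + t) :: complex) = \<bar>1 + t\<bar>" by (rule norm_of_real)
      also have "\<bar>1 + t\<bar> = 1 + t" using t by simp
      finally have "cmod (of_real (1 + t) * z) = (1 + t) * cmod z" by (simp only: norm_mult)
      also have "\<dots> > 1"
      proof -
        have "(1 + t) * cmod z \<ge> (1 + t) * 1" using z t by (intro mult_left_mono) auto
        then have "(1 + t) * cmod z \<ge> 1 + t" by simp
        moreover have "t > 0" using t by simp
        ultimately show ?thesis by linarith
      qed
      finally show ?thesis unfolding h_def using gpos by simp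
    qed
    ultimately have "0 \<le> h 0" by (rule continuous_ge_on_closure)
    then show ?thesis unfolding h_def by simp
  qed
  then show "cmod (B_op n l0 l1 l2 (scale_arg P R) z + Phi n k R r \<alpha> \<beta> * B_op n l0 l1 l2 (scale_arg P r) z)
         \<le> cmod (B_op n l0 l1 l2 (scale_arg F R) z + Phi n k R r \<alpha> \<beta> * B_op n l0 l1 l2 (scale_arg F r) z)"
    unfolding g_def \<Phi>_def by simp
next
  fix \<gamma> :: real and \<alpha> \<beta> z
  show "cmod (B_op n l0 l1 l2 (scale_arg (smult (cis \<gamma>) F) R) z
                  + Phi n k R r \<alpha> \<beta> * B_op n l0 l1 l2 (scale_arg (smult (cis \<gamma>) F) r) z)
            = cmod (B_op n l0 l1 l2 (scale_arg F R) z
                  + Phi n k R r \<alpha> \<beta> * B_op n l0 l1 l2 (scale_arg F r) z)"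
  proof -
    have "B_op n l0 l1 l2 (scale_arg (smult (cis \<gamma>) F) R) z
                  + Phi n k R r \<alpha> \<beta> * B_op n l0 l1 l2 (scale_arg (smult (cis \<gamma>) F) r) z
          = cis \<gamma> * (B_op n l0 l1 l2 (scale_arg F R) z
                  + Phi n k R r \<alpha> \<beta> * B_op n l0 l1 l2 (scale_arg F r) z)"
      by (simp add: scale_arg_smult B_op_smult algebra_simps)
    then show ?thesis by (simp add: norm_mult)
  qed
qed


end
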